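(* Let $\alpha\in(0,1)$ and let $\pi$ satisfy Condition 1 (with some $p\le n$). Then there exists a constant $C_1$, depending only on $\alpha$, $u_*$, $u_0$ (and on the constants $R,b,b',C'$ of Condition 1), such that for all $x$ with $|x|\ge C_1+\sqrt{2K(1+u_0)\log(n/p)}$ one has $m_x\ge\alpha$.
   Context: $\pi$ is a probability density on $(0,\infty)$ and $$m_x=\frac{\int_0^\infty u(1+u)^{-3/2}e^{\frac{x^2}{2}\frac{u}{1+u}}\pi(u)\,du}{\int_0^\infty (1+u)^{-1/2}e^{\frac{x^2}{2}\frac{u}{1+u}}\pi(u)\,du}$$ (the posterior mean of $\kappa=\sigma^2/(1+\sigma^2)$ given $X=x$ when $X\mid\theta\sim\mathcal N(\theta,1)$, $\theta\mid\sigma^2\sim\mathcal N(0,\sigma^2)$, $\sigma^2\sim\pi$). $\tau_n(p)=p/n$. Uniformly regularly varying at infinity: there exist $R,u_0>0$ with $1/R\le L(au)/L(u)\le R$ for all $a\in[1,2]$, $u\ge u_0$. Condition 1: for some $b\ge0$, $\pi(u)=L_n(u)e^{-bu}$, $L_n$ uniformly regularly varying at infinity with constants $R,u_0$ not depending on $n$; constants $C',b'>0$, $K\ge0$, $u_*\ge1$ with $C'\pi(u)\ge\tau_n(p)^Ke^{-b'u}$ for all $u\ge u_*$. *)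

theory Defs
  imports "HOL-Analysis.Analysis"
begin

text \<open>Posterior mean of kappa = sigma^2/(1+sigma^2) given X = x, for mixing density pi on (0,inf).\<close>
definition post_mean :: "(real \<Rightarrow> real) \<Rightarrow> real \<Rightarrow> real" where
  "post_mean \<pi> x =
     (LINT u:{0<..}|lborel. u * (1 + u) powr (-3/2) * exp (x\<^sup>2 / 2 * (u / (1 + u))) * \<pi> u)
   / (LINT u:{0<..}|lborel. (1 + u) powr (-1/2) * exp (x\<^sup>2 / 2 * (u / (1 + u))) * \<pi> u)"

definition prob_density_pos :: "(real \<Rightarrow> real) \<Rightarrow> bool" where
  "prob_density_pos \<pi> \<longleftrightarrow> (\<forall>u>0. \<pi> u \<ge> 0) \<and> set_integrable lborel {0<..} \<pi>
     \<and> (LINT u:{0<..}|lborel. \<pi> u) = 1"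

definition unif_reg_var :: "real \<Rightarrow> real \<Rightarrow> (real \<Rightarrow> real) \<Rightarrow> bool" where
  "unif_reg_var R u0 L \<longleftrightarrow>
     (\<forall>a u. 1 \<le> a \<and> a \<le> 2 \<and> u \<ge> u0 \<longrightarrow> 1 / R \<le> L (a * u) / L u \<and> L (a * u) / L u \<le> R)"

definition tau :: "nat \<Rightarrow> nat \<Rightarrow> real" where
  "tau n p = real p / real n"

definition condition1 :: "real \<Rightarrow> real \<Rightarrow> real \<Rightarrow> real \<Rightarrow> real \<Rightarrow> real \<Rightarrow> real \<Rightarrow> nat \<Rightarrow> nat \<Rightarrow> (real \<Rightarrow> real) \<Rightarrow> bool" where
  "condition1 R u0 b b' C' K ustar n p \<pi> \<longleftrightarrow>
     (\<exists>L. unif_reg_var R u0 L \<and> (\<forall>u>0. \<pi> u = L u * exp (- b * u)))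
     \<and> (\<forall>u\<ge>ustar. C' * \<pi> u \<ge> tau n p powr K * exp (- b' * u))"

end

theory Submission
  imports Defs
begin

lemma powr_m12: "(y::real) > 0 \<Longrightarrow> y powr (-1/2) = 1 / sqrt y"
  by (simp add: powr_minus_divide powr_half_sqrt)

lemma powr_m32: "(y::real) > 0 \<Longrightarrow> y powr (-3/2) = 1 / (y * sqrt y)"
proof -
  assume y: "y > 0"
  have "y powr (3/2) = y powr (1 + 1/2)" by simp
  also have "\<dots> = y powr 1 * y powr (1/2)" by (rule powr_add)
  also have "\<dots> = y * sqrt y" using y by (simp add: powr_half_sqrt)
  finally show ?thesis using y by (simp add: powr_minus_divide)
qed

lemma reg_R1:
  assumes reg: "unif_reg_var R u0 L" and R: "R > 0" and pos: "L u0 > 0"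
  shows "R \<ge> 1"
proof -
  have H: "\<forall>a w. 1 \<le> a \<and> a \<le> 2 \<and> u0 \<le> w \<longrightarrow> 1 / R \<le> L (a * w) / L w \<and> L (a * w) / L w \<le> R"
    using reg unfolding unif_reg_var_def by blast
  have "L (1*u0) / L u0 \<le> R" using H[rule_format, of 1 u0] by simp
  then show ?thesis using pos by simp
qed

lemma reg_pos:
  assumes reg: "unif_reg_var R u0 L" and R: "R > 0" and nn: "L v \<ge> 0" and v: "v \<ge> u0"
  shows "L v > 0"
proof (rule ccontr)
  assume "\<not> L v > 0"
  then have "L v = 0" using nn by simp
  moreover have H: "\<forall>a w. 1 \<le> a \<and> a \<le> 2 \<and> u0 \<le> w \<longrightarrow> 1 / R \<le> L (a * w) / L w \<and> L (a * w) / L w \<le> R"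
    using reg unfolding unif_reg_var_def by blast
  moreover have "1 / R \<le> L (1 * v) / L v" using H[rule_format, of 1 v] v by simp
  ultimately show False using R by simp
qed

lemma reg_chain:
  assumes reg: "unif_reg_var R u0 L" and R: "R \<ge> 1"
    and pos: "\<And>v. v \<ge> u0 \<Longrightarrow> L v > 0" and u: "u \<ge> u0" and u0: "u0 > 0"
  shows "u \<le> t \<Longrightarrow> t \<le> 2^k * u \<Longrightarrow> (1/R)^k * L u \<le> L t"
proof (induction k arbitrary: t)
  case 0
  then show ?case by simp
next
  case (Suc k)
  have Lu: "L u > 0" using pos u by simp
  have r1: "1/R \<le> 1" "0 \<le> 1/R" using R by auto
  show ?case
  proof (cases "t \<le> 2^k * u")
    case True
    then have "(1/R)^k * L u \<le> L t" using Suc by simp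
    moreover have "(1/R)^Suc k * L u \<le> (1/R)^k * L u"
      using r1 Lu power_decreasing[of k "Suc k" "1/R"] by (simp del: power_Suc)
    ultimately show ?thesis by linarith
  next
    case False
    define s where "s = 2^k * u"
    have s0: "s \<ge> u" unfolding s_def using u u0 by (simp add: mult_le_cancel_right2)
    then have IH: "(1/R)^k * L u \<le> L s" using Suc.IH[of s] s_def by simp
    have sp: "s > 0" using s0 u u0 by simp
    define a where "a = t / s"
    have a1: "1 \<le> a" using False sp unfolding a_def s_def by simp
    have a2: "a \<le> 2" using Suc.prems sp unfolding a_def s_def by (simp add: field_simps)
    have ts: "t = a * s" unfolding a_def using sp by simp
    have Ls: "L s > 0" using pos s0 u by simp
    have "1/R \<le> L (a * s) / L s" using reg a1 a2 s0 u unfolding unif_reg_var_def by auto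
    then have "L s / R \<le> L t" using Ls ts by (simp add: field_simps)
    moreover have "(1/R)^Suc k * L u \<le> L s / R" using IH R by (simp add: field_simps divide_right_mono)
    ultimately show ?thesis by linarith
  qed
qed

lemma neg_bound: "(d::real) \<ge> -1 \<Longrightarrow> 0 \<le> F \<Longrightarrow> F \<le> C \<Longrightarrow> 0 \<le> q \<Longrightarrow> -C*q \<le> d*F*q"
proof -
  assume a: "d \<ge> -1" "0 \<le> F" "F \<le> C" "0 \<le> q"
  have "0 \<le> (d+1)*F" using a by simp
  then have "-C \<le> d*F" using a by (simp add: algebra_simps)
  then show ?thesis using a(4) by (rule mult_right_mono)
qed

lemma pos_bound: "(d0::real) \<le> d \<Longrightarrow> 0 \<le> d0 \<Longrightarrow> F0 \<le> F \<Longrightarrow> 0 \<le> F0 \<Longrightarrow> 0 \<le> q \<Longrightarrow> d0*F0*q \<le> d*F*q"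
  by (intro mult_right_mono mult_mono) auto

lemma core:
  fixes \<pi> :: "real \<Rightarrow> real" and x \<alpha> \<beta> u0 V U1 X c m2 :: real
  assumes dens: "prob_density_pos \<pi>"
  and a0: "0 < \<alpha>" and ab: "\<alpha> < \<beta>" and b1: "\<beta> < 1"
  and u0: "u0 > 0" and V1: "u0 \<le> V" and V2: "\<alpha> / (1 - \<alpha>) \<le> V"
  and U1a: "V < U1" and U1b: "\<beta> \<le> U1 * (1 - \<beta>)" and X: "2 * U1 < X"
  and c: "c > 0"
  and cmp: "\<And>u t. u0 \<le> u \<Longrightarrow> u \<le> V \<Longrightarrow> U1 \<le> t \<Longrightarrow> t \<le> 2*U1 \<Longrightarrow> c * \<pi> u \<le> \<pi> t"
  and m2: "\<And>u. X \<le> u \<Longrightarrow> u \<le> 2*X \<Longrightarrow> m2 \<le> \<pi> u"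
  and ineq1: "exp (x\<^sup>2/2*\<alpha>) * V / (c * U1) \<le> (\<beta> - \<alpha>) / sqrt (1 + 2*U1) * exp (x\<^sup>2/2*\<beta>)"
  and ineq2: "2 * exp (x\<^sup>2/2*(u0/(1+u0))) \<le> (\<beta> - \<alpha>) / sqrt (1 + 2*X) * exp (x\<^sup>2/2*(X/(1+X))) * (X * m2)"
  shows "\<alpha> \<le> post_mean \<pi> x"
proof -
  define e where "e u = exp (x\<^sup>2/2*(u/(1+u)))" for u
  define f0 where "f0 u = e u / sqrt (1+u)" for u
  define P where "P u = indicator {0<..} u * \<pi> u" for u :: real
  have pnn: "\<And>u. u > 0 \<Longrightarrow> \<pi> u \<ge> 0" using dens unfolding prob_density_pos_def by auto
  have Pint: "integrable lborel P" using dens unfolding prob_density_pos_def set_integrable_def P_def by simp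
  have P1: "integral\<^sup>L lborel P = 1" using dens unfolding prob_density_pos_def set_lebesgue_integral_def P_def by simp
  have Sint: "\<And>S. S \<in> sets lborel \<Longrightarrow> S \<subseteq> {0<..} \<Longrightarrow> integrable lborel (\<lambda>u. indicator S u * \<pi> u)"
  proof -
    fix S :: "real set" assume S: "S \<in> sets lborel" "S \<subseteq> {0<..}"
    have "integrable lborel (\<lambda>u. indicator S u *\<^sub>R P u)" by (rule integrable_mult_indicator[OF S(1) Pint])
    moreover have "(\<lambda>u. indicator S u *\<^sub>R P u) = (\<lambda>u. indicator S u * \<pi> u)"
    proof (rule ext)
      fix u
      show "indicator S u *\<^sub>R P u = indicator S u * \<pi> u"
        using S(2) by (cases "u \<in> S") (auto simp: P_def indicator_def)
    qed
    ultimately show "integrable lborel (\<lambda>u. indicator S u * \<pi> u)" by simp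
  qed
  have wint: "\<And>w M. w \<in> borel_measurable lborel \<Longrightarrow> (\<And>u. u > 0 \<Longrightarrow> \<bar>w u\<bar> \<le> M) \<Longrightarrow> integrable lborel (\<lambda>u. indicator {0<..} u * (w u * \<pi> u))"
  proof -
    fix w :: "real \<Rightarrow> real" and M :: real
    assume wm: "w \<in> borel_measurable lborel" and wb: "\<And>u. u > 0 \<Longrightarrow> \<bar>w u\<bar> \<le> M"
    have M0: "M \<ge> 0" using wb[of 1] by simp
    have eq: "(\<lambda>u. indicator {0<..} u * (w u * \<pi> u)) = (\<lambda>u. w u * P u)" by (auto simp: P_def)
    have "integrable lborel (\<lambda>u. w u * P u)"
    proof (rule Bochner_Integration.integrable_bound[of lborel "\<lambda>u. M * P u"])
      show "integrable lborel (\<lambda>u. M * P u)" using Pint by simp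
      show "(\<lambda>u. w u * P u) \<in> borel_measurable lborel" using wm borel_measurable_integrable[OF Pint] by measurable
      show "AE u in lborel. norm (w u * P u) \<le> norm (M * P u)"
      proof (rule AE_I2)
        fix u :: real
        show "norm (w u * P u) \<le> norm (M * P u)"
        proof (cases "u > 0")
          case True
          then have "\<bar>w u\<bar> \<le> M" by (rule wb)
          then show ?thesis using M0 by (simp add: abs_mult mult_right_mono)
        next
          case False then show ?thesis by (simp add: P_def)
        qed
      qed
    qed
    then show "integrable lborel (\<lambda>u. indicator {0<..} u * (w u * \<pi> u))" using eq by simp
  qed
  have epos: "\<And>u. e u > 0" unfolding e_def by simp
  have ebd: "\<And>u. u > 0 \<Longrightarrow> e u \<le> exp (x\<^sup>2/2)"
  proof -
    fix u :: real assume u: "u > 0"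
    have "u/(1+u) \<le> 1" using u by simp
    then have "x\<^sup>2/2*(u/(1+u)) \<le> x\<^sup>2/2*1" by (intro mult_left_mono) auto
    then show "e u \<le> exp (x\<^sup>2/2)" unfolding e_def by simp
  qed
  have emono: "\<And>u v. 0 < u \<Longrightarrow> u \<le> v \<Longrightarrow> e u \<le> e v"
  proof -
    fix u v :: real assume uv: "0 < u" "u \<le> v"
    have "u/(1+u) \<le> v/(1+v)" using uv by (simp add: field_simps)
    then have "x\<^sup>2/2*(u/(1+u)) \<le> x\<^sup>2/2*(v/(1+v))" by (intro mult_left_mono) auto
    then show "e u \<le> e v" unfolding e_def by simp
  qed
  define Nf where "Nf u = indicator {0<..} u * ((u/(1+u) * f0 u) * \<pi> u)" for u :: real
  define Df where "Df u = indicator {0<..} u * (f0 u * \<pi> u)" for u :: real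
  have Nint: "integrable lborel Nf" unfolding Nf_def
  proof (rule wint)
    show "(\<lambda>u. u/(1+u) * f0 u) \<in> borel_measurable lborel" unfolding f0_def e_def by measurable
    fix u :: real assume u: "u > 0"
    have "sqrt (1+u) \<ge> 1" using u by simp
    then have "f0 u \<le> e u" unfolding f0_def using epos[of u] by (simp add: divide_le_eq mult_le_cancel_left1)
    then have "f0 u \<le> exp (x\<^sup>2/2)" using ebd[OF u] by linarith
    moreover have "0 \<le> u/(1+u)" "u/(1+u) \<le> 1" using u by auto
    moreover have "f0 u \<ge> 0" unfolding f0_def using epos[of u] u by simp
    ultimately have "u/(1+u) * f0 u \<le> 1 * f0 u" "0 \<le> u/(1+u) * f0 u"
      by (intro mult_right_mono mult_nonneg_nonneg; simp)+
    then show "\<bar>u/(1+u) * f0 u\<bar> \<le> exp (x\<^sup>2/2)" using \<open>f0 u \<le> exp (x\<^sup>2/2)\<close>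
      by (metis abs_of_nonneg mult_1 order_trans)
  qed
  have Dint: "integrable lborel Df" unfolding Df_def
  proof (rule wint)
    show "f0 \<in> borel_measurable lborel" unfolding f0_def e_def by measurable
    fix u :: real assume u: "u > 0"
    have "sqrt (1+u) \<ge> 1" using u by simp
    then have "f0 u \<le> e u" unfolding f0_def using epos[of u] by (simp add: divide_le_eq mult_le_cancel_left1)
    then have "f0 u \<le> exp (x\<^sup>2/2)" using ebd[OF u] by linarith
    moreover have "f0 u \<ge> 0" unfolding f0_def using epos[of u] u by simp
    ultimately show "\<bar>f0 u\<bar> \<le> exp (x\<^sup>2/2)" by simp
  qed
  have Neq: "(LINT u:{0<..}|lborel. u * (1 + u) powr (-3/2) * exp (x\<^sup>2 / 2 * (u / (1 + u))) * \<pi> u) = integral\<^sup>L lborel Nf"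
    unfolding set_lebesgue_integral_def Nf_def
  proof (intro Bochner_Integration.integral_cong refl)
    fix u :: real
    show "indicator {0<..} u *\<^sub>R (u * (1 + u) powr (-3/2) * exp (x\<^sup>2 / 2 * (u / (1 + u))) * \<pi> u) = indicator {0<..} u * ((u/(1+u) * f0 u) * \<pi> u)"
    proof (cases "u > 0")
      case True
      then show ?thesis unfolding f0_def e_def using powr_m32[of "1+u"] by (simp add: ac_simps)
    qed simp
  qed
  have Deq: "(LINT u:{0<..}|lborel. (1 + u) powr (-1/2) * exp (x\<^sup>2 / 2 * (u / (1 + u))) * \<pi> u) = integral\<^sup>L lborel Df"
    unfolding set_lebesgue_integral_def Df_def
  proof (intro Bochner_Integration.integral_cong refl)
    fix u :: real
    show "indicator {0<..} u *\<^sub>R ((1 + u) powr (-1/2) * exp (x\<^sup>2 / 2 * (u / (1 + u))) * \<pi> u) = indicator {0<..} u * (f0 u * \<pi> u)"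
    proof (cases "u > 0")
      case True
      then show ?thesis unfolding f0_def e_def using powr_m12[of "1+u"] by (simp add: ac_simps)
    qed simp
  qed
  define cA where "cA = exp (x\<^sup>2/2*(u0/(1+u0)))"
  define cB where "cB = exp (x\<^sup>2/2*\<alpha>)"
  define p1 where "p1 = (\<beta> - \<alpha>) / sqrt (1 + 2*U1) * exp (x\<^sup>2/2*\<beta>)"
  define p2 where "p2 = (\<beta> - \<alpha>) / sqrt (1 + 2*X) * exp (x\<^sup>2/2*(X/(1+X)))"
  define A where "A = {0<..<u0}"
  define B where "B = {u0..V}"
  define W1 where "W1 = {U1..2*U1}"
  define W2 where "W2 = {X..2*X}"
  define I where "I S = integral\<^sup>L lborel (\<lambda>u. indicator S u * \<pi> u)" for S
  have U1pos: "U1 > 0" using u0 V1 U1a by linarith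
  have Xpos: "X > 0" using U1pos X by linarith
  have iA: "integrable lborel (\<lambda>u. indicator A u * \<pi> u)" unfolding A_def by (rule Sint) auto
  have iB: "integrable lborel (\<lambda>u. indicator B u * \<pi> u)" unfolding B_def using u0 by (intro Sint) auto
  have iW1: "integrable lborel (\<lambda>u. indicator W1 u * \<pi> u)" unfolding W1_def using U1pos by (intro Sint) auto
  have iW2: "integrable lborel (\<lambda>u. indicator W2 u * \<pi> u)" unfolding W2_def using Xpos by (intro Sint) auto
  define h where "h u = p1 * (indicator W1 u * \<pi> u) + p2 * (indicator W2 u * \<pi> u) - (cA * (indicator A u * \<pi> u) + cB * (indicator B u * \<pi> u))" for u
  have hint: "integrable lborel h" unfolding h_def using iA iB iW1 iW2 by auto
  have hI: "integral\<^sup>L lborel h = p1 * I W1 + p2 * I W2 - (cA * I A + cB * I B)"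
    unfolding h_def I_def using iA iB iW1 iW2 by simp
  define G where "G u = Nf u - \<alpha> * Df u" for u
  have Gint: "integrable lborel G" unfolding G_def using Nint Dint by auto
  have GI: "integral\<^sup>L lborel G = integral\<^sup>L lborel Nf - \<alpha> * integral\<^sup>L lborel Df"
    unfolding G_def using Nint Dint by simp
  have Gh: "h u \<le> G u" for u
  proof (cases "u > 0")
    case False
    then have "u \<notin> A" "u \<notin> B" "u \<notin> W1" "u \<notin> W2" unfolding A_def B_def W1_def W2_def using u0 V1 U1a X by auto
    then show ?thesis using False by (simp add: h_def G_def Nf_def Df_def)
  next
    case True
    define k where "k = u/(1+u)"
    have G_eq: "G u = (k - \<alpha>) * f0 u * \<pi> u" unfolding G_def Nf_def Df_def k_def using True by (simp add: algebra_simps)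
    have f0pos: "f0 u > 0" unfolding f0_def using epos True by simp
    have pu: "\<pi> u \<ge> 0" using pnn True by simp
    have k01: "0 \<le> k" "k < 1" unfolding k_def using True by auto
    have sq1: "sqrt (1+u) \<ge> 1" using True by simp
    then have f0le: "f0 u \<le> e u" unfolding f0_def using epos[of u] by (simp add: divide_le_eq mult_le_cancel_left1)
    have kge: "\<alpha> \<le> k" if "V < u"
    proof -
      have "\<alpha> \<le> V * (1 - \<alpha>)" using V2 a0 ab b1 by (simp add: divide_le_eq)
      moreover have "V * (1 - \<alpha>) \<le> u * (1 - \<alpha>)" using that ab b1 by (intro mult_right_mono) auto
      ultimately have "\<alpha> \<le> u * (1 - \<alpha>)" by linarith
      then show ?thesis unfolding k_def using True by (simp add: le_divide_eq algebra_simps)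
    qed
    have Gnn: "G u \<ge> 0" if "\<alpha> \<le> k" unfolding G_eq using that f0pos pu by simp
    consider (a) "u < u0" | (b) "u0 \<le> u" "u \<le> V" | (c) "U1 \<le> u" "u \<le> 2*U1" | (d) "X \<le> u" "u \<le> 2*X"
      | (r) "V < u" "\<not> (U1 \<le> u \<and> u \<le> 2*U1)" "\<not> (X \<le> u \<and> u \<le> 2*X)" by linarith
    then show ?thesis
    proof cases
      case a
      then have "u \<in> A" "u \<notin> B" "u \<notin> W1" "u \<notin> W2" unfolding A_def B_def W1_def W2_def using True V1 U1a X by auto
      then have hu: "h u = - cA * \<pi> u" by (simp add: h_def)
      have "e u \<le> e u0" using emono[of u u0] True a by simp
      moreover have "e u0 = cA" unfolding cA_def e_def by simp
      ultimately have "f0 u \<le> cA" using f0le by linarith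
      then have "- cA * \<pi> u \<le> (k - \<alpha>) * f0 u * \<pi> u"
        using neg_bound[of "k - \<alpha>" "f0 u" cA "\<pi> u"] k01 f0pos pu a0 ab b1 by simp
      then show ?thesis using hu G_eq by simp
    next
      case b
      then have "u \<notin> A" "u \<in> B" "u \<notin> W1" "u \<notin> W2" unfolding A_def B_def W1_def W2_def using True V1 U1a X by auto
      then have hu: "h u = - cB * \<pi> u" by (simp add: h_def)
      show ?thesis
      proof (cases "\<alpha> \<le> k")
        case True
        have "0 \<le> cB * \<pi> u" unfolding cB_def using pu by simp
        then show ?thesis using Gnn[OF True] hu by linarith
      next
        case False
        then have "x\<^sup>2/2*k \<le> x\<^sup>2/2*\<alpha>" by (intro mult_left_mono) auto
        then have "e u \<le> cB" unfolding cB_def e_def k_def by simp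
        then have "f0 u \<le> cB" using f0le by linarith
        then have "- cB * \<pi> u \<le> (k - \<alpha>) * f0 u * \<pi> u"
          using neg_bound[of "k - \<alpha>" "f0 u" cB "\<pi> u"] k01 f0pos pu a0 ab b1 by simp
        then show ?thesis using hu G_eq by simp
      qed
    next
      case c
      then have "u \<notin> A" "u \<notin> B" "u \<in> W1" "u \<notin> W2" unfolding A_def B_def W1_def W2_def using True V1 U1a X by auto
      then have hu: "h u = p1 * \<pi> u" by (simp add: h_def)
      have "\<beta> \<le> u * (1 - \<beta>)" using U1b c b1 by (meson dual_order.trans le_diff_eq mult_right_mono less_eq_real_def diff_ge_0_iff_ge)
      then have kb: "\<beta> \<le> k" unfolding k_def using True by (simp add: le_divide_eq algebra_simps)
      then have "x\<^sup>2/2*\<beta> \<le> x\<^sup>2/2*k" by (intro mult_left_mono) auto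
      then have eb: "exp (x\<^sup>2/2*\<beta>) \<le> e u" unfolding e_def k_def by simp
      have "sqrt (1+u) \<le> sqrt (1+2*U1)" using c by simp
      then have "exp (x\<^sup>2/2*\<beta>) / sqrt (1+2*U1) \<le> e u / sqrt (1+u)"
        using eb True sq1 epos[of u] by (intro frac_le) auto
      then have "(\<beta> - \<alpha>) * (exp (x\<^sup>2/2*\<beta>) / sqrt (1+2*U1)) * \<pi> u \<le> (k - \<alpha>) * f0 u * \<pi> u"
        unfolding f0_def using pos_bound[of "\<beta> - \<alpha>" "k - \<alpha>" "exp (x\<^sup>2/2*\<beta>) / sqrt (1+2*U1)" "e u / sqrt (1+u)" "\<pi> u"] kb ab pu U1pos by simp
      then show ?thesis using hu G_eq unfolding p1_def by simp
    next
      case d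
      then have "u \<notin> A" "u \<notin> B" "u \<notin> W1" "u \<in> W2" unfolding A_def B_def W1_def W2_def using True V1 U1a X by auto
      then have hu: "h u = p2 * \<pi> u" by (simp add: h_def)
      have "\<beta> \<le> u * (1 - \<beta>)" using U1b d X U1pos b1
        by (smt (verit, best) mult_right_mono)
      then have kb: "\<beta> \<le> k" unfolding k_def using True by (simp add: le_divide_eq algebra_simps)
      have eb: "e X \<le> e u" using emono[of X u] Xpos d by simp
      have "sqrt (1+u) \<le> sqrt (1+2*X)" using d by simp
      then have "e X / sqrt (1+2*X) \<le> e u / sqrt (1+u)"
        using eb True sq1 epos[of u] by (intro frac_le) auto
      then have "(\<beta> - \<alpha>) * (e X / sqrt (1+2*X)) * \<pi> u \<le> (k - \<alpha>) * f0 u * \<pi> u"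
        unfolding f0_def using pos_bound[of "\<beta> - \<alpha>" "k - \<alpha>" "e X / sqrt (1+2*X)" "e u / sqrt (1+u)" "\<pi> u"] kb ab pu epos[of X] Xpos by simp
      then show ?thesis using hu G_eq unfolding p2_def e_def by simp
    next
      case r
      then have "u \<notin> A" "u \<notin> B" "u \<notin> W1" "u \<notin> W2" unfolding A_def B_def W1_def W2_def using True V1 U1a X by auto
      then have hu: "h u = 0" by (simp add: h_def)
      show ?thesis using Gnn kge r hu by simp
    qed
  qed
  have hG: "integral\<^sup>L lborel h \<le> integral\<^sup>L lborel G"
    by (rule integral_mono[OF hint Gint Gh])
  have Inn: "I S \<ge> 0" if "S \<subseteq> {0<..}" for S
    unfolding I_def
  proof (rule Bochner_Integration.integral_nonneg)
    fix u :: real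
    show "0 \<le> indicator S u * \<pi> u" using that pnn by (cases "u \<in> S") auto
  qed
  have IA: "I A \<le> 1"
  proof -
    have "I A \<le> integral\<^sup>L lborel P" unfolding I_def
    proof (rule integral_mono[OF iA Pint])
      fix u :: real
      show "indicator A u * \<pi> u \<le> P u" unfolding A_def P_def using pnn by (cases "u > 0") (auto simp: indicator_def)
    qed
    then show ?thesis using P1 by simp
  qed
  have IA0: "I A \<ge> 0" by (rule Inn) (auto simp: A_def)
  have IB0: "I B \<ge> 0" by (rule Inn) (use u0 in \<open>auto simp: B_def\<close>)
  have IW10: "I W1 \<ge> 0" by (rule Inn) (use U1pos in \<open>auto simp: W1_def\<close>)
  have intc: "integrable lborel (\<lambda>u. indicator {a..b} u * (C::real))" for a b C :: real
    by (intro integrable_mult_left integrable_real_indicator) (auto simp: emeasure_lborel_Icc_eq borel_closed)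
  have intcI: "integral\<^sup>L lborel (\<lambda>u. indicator {a..b} u * (C::real)) = C * (b - a)" if "a \<le> b" for a b C :: real
    using that by simp
  have IW2: "m2 * X \<le> I W2"
  proof -
    have "integral\<^sup>L lborel (\<lambda>u. indicator W2 u * m2) \<le> I W2" unfolding I_def
    proof (rule integral_mono[OF _ iW2])
      show "integrable lborel (\<lambda>u. indicator W2 u * m2)" unfolding W2_def by (rule intc)
      fix u :: real
      show "indicator W2 u * m2 \<le> indicator W2 u * \<pi> u" unfolding W2_def using m2 by (auto simp: indicator_def)
    qed
    moreover have "integral\<^sup>L lborel (\<lambda>u. indicator W2 u * m2) = m2 * X" unfolding W2_def
      using intcI[of X "2*X" m2] Xpos by simp
    ultimately show ?thesis by linarith
  qed
  have cU: "c * U1 > 0" using c U1pos by simp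
  have ptw: "\<pi> u \<le> I W1 / (c * U1)" if "u \<in> B" for u
  proof -
    have "integral\<^sup>L lborel (\<lambda>t. indicator W1 t * (c * \<pi> u)) \<le> I W1" unfolding I_def
    proof (rule integral_mono[OF _ iW1])
      show "integrable lborel (\<lambda>t. indicator W1 t * (c * \<pi> u))" unfolding W1_def by (rule intc)
      fix t :: real
      show "indicator W1 t * (c * \<pi> u) \<le> indicator W1 t * \<pi> t"
        unfolding W1_def using cmp[of u t] that unfolding B_def by (auto simp: indicator_def)
    qed
    moreover have "integral\<^sup>L lborel (\<lambda>t. indicator W1 t * (c * \<pi> u)) = c * \<pi> u * U1" unfolding W1_def
      using intcI[of U1 "2*U1" "c * \<pi> u"] U1pos by simp
    ultimately have "c * \<pi> u * U1 \<le> I W1" by linarith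
    then have "\<pi> u * (c * U1) \<le> I W1" by (simp add: ac_simps)
    then show ?thesis using cU by (simp add: le_divide_eq)
  qed
  have IB: "I B \<le> I W1 / (c * U1) * (V - u0)"
  proof -
    have "I B \<le> integral\<^sup>L lborel (\<lambda>u. indicator B u * (I W1 / (c * U1)))" unfolding I_def[of B]
    proof (rule integral_mono[OF iB])
      show "integrable lborel (\<lambda>u. indicator B u * (I W1 / (c * U1)))" unfolding B_def by (rule intc)
      fix u :: real
      show "indicator B u * \<pi> u \<le> indicator B u * (I W1 / (c * U1))"
        using ptw[of u] by (auto simp: indicator_def)
    qed
    moreover have "integral\<^sup>L lborel (\<lambda>u. indicator B u * (I W1 / (c * U1))) = I W1 / (c * U1) * (V - u0)"
      unfolding B_def using intcI[of u0 V] V1 by simp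
    ultimately show ?thesis by linarith
  qed
  have cApos: "cA > 0" unfolding cA_def by simp
  have cBpos: "cB > 0" unfolding cB_def by simp
  have p2nn: "p2 \<ge> 0" unfolding p2_def using ab Xpos by (intro mult_nonneg_nonneg divide_nonneg_nonneg) auto
  have s1: "cB * I B \<le> p1 * I W1"
  proof -
    have q0: "I W1 / (c * U1) \<ge> 0" using IW10 cU by simp
    have "cB * I B \<le> cB * (I W1 / (c * U1) * (V - u0))" using IB cBpos by (intro mult_left_mono) auto
    also have "\<dots> \<le> cB * (I W1 / (c * U1) * V)" using q0 cBpos u0 by (intro mult_left_mono) auto
    also have "\<dots> = (cB * V / (c * U1)) * I W1" by simp
    also have "\<dots> \<le> p1 * I W1" using ineq1 IW10 unfolding cB_def p1_def by (intro mult_right_mono) auto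
    finally show ?thesis .
  qed
  have s2: "2 * cA \<le> p2 * I W2"
  proof -
    have "p2 * (X * m2) \<le> p2 * I W2" using IW2 p2nn by (intro mult_left_mono) (auto simp: ac_simps)
    moreover have "2 * cA \<le> p2 * (X * m2)" using ineq2 unfolding cA_def p2_def by simp
    ultimately show ?thesis by linarith
  qed
  have s3: "cA * I A \<le> cA" using IA cApos by simp
  have hpos: "integral\<^sup>L lborel h > 0" using hI s1 s2 s3 cApos by linarith
  have ND: "integral\<^sup>L lborel Nf \<le> integral\<^sup>L lborel Df"
  proof (rule integral_mono[OF Nint Dint])
    fix u :: real
    show "Nf u \<le> Df u"
    proof (cases "u > 0")
      case True
      have "f0 u * \<pi> u \<ge> 0" unfolding f0_def using True epos[of u] pnn[OF True] by simp
      moreover have "u / (1+u) \<le> 1" using True by simp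
      ultimately have "u / (1+u) * (f0 u * \<pi> u) \<le> 1 * (f0 u * \<pi> u)" by (intro mult_right_mono)
      then show ?thesis unfolding Nf_def Df_def using True by (simp add: ac_simps)
    qed (simp add: Nf_def Df_def)
  qed
  have key: "\<alpha> * integral\<^sup>L lborel Df < integral\<^sup>L lborel Nf" using hpos hG GI by linarith
  then have Dpos: "integral\<^sup>L lborel Df > 0" using ND b1 ab
    by (smt (verit, best) mult_le_cancel_right1 mult_less_cancel_left_pos a0)
  have "post_mean \<pi> x = integral\<^sup>L lborel Nf / integral\<^sup>L lborel Df"
    unfolding post_mean_def Neq Deq by simp
  then show ?thesis using key Dpos by (simp add: le_divide_eq)
qed

lemma Ebound:
  fixes X Y C1 s D0 u0 b' KL :: real
  assumes u0: "u0 > 0" and b': "b' > 0" and D0: "D0 = (1+u0)*(1+4*b')"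
    and C1: "C1 \<ge> 2*D0" and s: "s \<ge> 0" and s2: "s^2 = 2*KL*(1+u0)"
    and XY: "X \<ge> C1 + s" and X1: "X \<ge> 1"
  shows "X\<^sup>2/2*(X/(1+X)) - KL - 2*b'*X - X\<^sup>2/2*(u0/(1+u0)) \<ge> C1^2/(4*(1+u0))"
proof -
  have D0p: "D0 > 0" using D0 u0 b' by simp
  have e1a: "X\<^sup>2/2*(X/(1+X)) = X\<^sup>2/2 - X\<^sup>2/(2*(1+X))" using X1 by (simp add: field_simps)
  have e1b: "X\<^sup>2/2*(u0/(1+u0)) = X\<^sup>2/2 - X\<^sup>2/(2*(1+u0))" using u0 by (simp add: field_simps)
  have e1: "X\<^sup>2/2*(X/(1+X)) - X\<^sup>2/2*(u0/(1+u0)) = X\<^sup>2/(2*(1+u0)) - X\<^sup>2/(2*(1+X))"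
    using e1a e1b by linarith
  have "X\<^sup>2/(1+X) \<le> X" using X1 by (simp add: divide_le_eq power2_eq_square)
  then have "(X\<^sup>2/(1+X))/2 \<le> X/2" by (rule divide_right_mono) simp
  moreover have "X\<^sup>2/(2*(1+X)) = (X\<^sup>2/(1+X))/2" by simp
  ultimately have e2: "X\<^sup>2/(2*(1+X)) \<le> X/2" by (simp only:)
  have e3: "D0 * X / (2*(1+u0)) = X/2 + 2*b'*X" using D0 u0 by (simp add: field_simps)
  define Y where "Y = C1 + s"
  have YD: "Y \<ge> D0" using C1 s D0p unfolding Y_def by simp
  have e4: "X\<^sup>2 - D0*X \<ge> Y\<^sup>2 - D0*Y"
  proof -
    have "0 \<le> (X - Y) * (X + Y - D0)" using XY YD D0p unfolding Y_def by (intro mult_nonneg_nonneg) auto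
    then show ?thesis by (simp add: algebra_simps power2_eq_square)
  qed
  have e5: "Y\<^sup>2 - D0*Y \<ge> s^2 + C1^2/2"
  proof -
    have C1p: "C1 \<ge> 0" using C1 D0p by simp
    have "0 \<le> C1 * (C1/2 - D0)" using C1 C1p by (intro mult_nonneg_nonneg) auto
    moreover have "0 \<le> s * (2*C1 - D0)" using C1 s D0p by (intro mult_nonneg_nonneg) auto
    ultimately show ?thesis unfolding Y_def by (simp add: algebra_simps power2_eq_square)
  qed
  have "(X\<^sup>2 - D0*X)/(2*(1+u0)) \<ge> (s^2 + C1^2/2)/(2*(1+u0))"
    using e4 e5 u0 by (intro divide_right_mono) auto
  moreover have "(s^2 + C1^2/2)/(2*(1+u0)) = KL + C1^2/(4*(1+u0))" using s2 u0 by (simp add: field_simps)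
  moreover have "(X\<^sup>2 - D0*X)/(2*(1+u0)) = X\<^sup>2/(2*(1+u0)) - D0 * X / (2*(1+u0))" by (simp add: diff_divide_distrib)
  ultimately show ?thesis using e1 e2 e3 by linarith
qed

lemma rearr:
  fixes eE eB eA eK eb d sq X C' :: real
  assumes "eE * eB = eA * eK * eb" "C' > 0" "sq > 0"
  shows "d / sq * eA * (X * (eK * eb / C')) = (d / C') * (X / sq) * eE * eB"
proof -
  have "(d / C') * (X / sq) * eE * eB = (d / C') * (X / sq) * (eE * eB)" by (simp add: ac_simps)
  also have "\<dots> = (d / C') * (X / sq) * (eA * eK * eb)" using assms(1) by simp
  also have "\<dots> = d / sq * eA * (X * (eK * eb / C'))" using assms(2,3) by (simp add: field_simps)
  finally show ?thesis by simp
qed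

theorem lemma1:
  fixes \<alpha> R u0 b b' C' ustar :: real
  assumes "0 < \<alpha>" "\<alpha> < 1"
    and "R > 0" "u0 > 0" "b \<ge> 0" "b' > 0" "C' > 0" "ustar \<ge> 1"
  shows "\<exists>C1::real. \<forall>(n::nat) (p::nat) (K::real) (\<pi>::real \<Rightarrow> real) (x::real).
           1 \<le> p \<and> p \<le> n \<and> K \<ge> 0 \<and> prob_density_pos \<pi>
           \<and> condition1 R u0 b b' C' K ustar n p \<pi>
           \<and> \<bar>x\<bar> \<ge> C1 + sqrt (2 * K * (1 + u0) * ln (real n / real p))
           \<longrightarrow> post_mean \<pi> x \<ge> \<alpha>"
proof -
  note a0 = assms(1) and a1 = assms(2) and R0 = assms(3) and u0 = assms(4) and b0 = assms(5)
    and b'0 = assms(6) and C'0 = assms(7) and us = assms(8)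
  define \<beta> where "\<beta> = (1+\<alpha>)/2"
  define V where "V = max u0 (\<alpha>/(1-\<alpha>))"
  define U1 where "U1 = V + 1 + (1+\<alpha>)/(1-\<alpha>)"
  have ab: "\<alpha> < \<beta>" and b1: "\<beta> < 1" unfolding \<beta>_def using a0 a1 by auto
  have V1: "u0 \<le> V" and V2: "\<alpha>/(1-\<alpha>) \<le> V" unfolding V_def by auto
  have ra: "(1+\<alpha>)/(1-\<alpha>) > 0" using a0 a1 by simp
  have U1a: "V < U1" unfolding U1_def using ra by simp
  have U1pos: "U1 > 0" using U1a V1 u0 by linarith
  have U1b: "\<beta> \<le> U1 * (1 - \<beta>)"
  proof -
    have "(1+\<alpha>)/(1-\<alpha>) \<le> U1" unfolding U1_def using V1 u0 by simp
    then have "(1+\<alpha>)/(1-\<alpha>) * ((1-\<alpha>)/2) \<le> U1 * ((1-\<alpha>)/2)" using a1 by (intro mult_right_mono) auto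
    moreover have "(1+\<alpha>)/(1-\<alpha>) * ((1-\<alpha>)/2) = \<beta>" unfolding \<beta>_def using a1 by (simp add: field_simps)
    moreover have "U1 * (1 - \<beta>) = U1 * ((1-\<alpha>)/2)" unfolding \<beta>_def by (simp add: field_simps)
    ultimately show ?thesis by linarith
  qed
  obtain k :: nat where k: "2*U1/u0 < 2^k" using real_arch_pow[of 2 "2*U1/u0"] by auto
  have k2: "2*U1 \<le> 2^k * u0" using k u0 by (simp add: divide_less_eq)
  define c where "c = (1/R)^k * exp (-b*(2*U1))"
  have cpos: "c > 0" unfolding c_def using R0 by simp
  define Q1 where "Q1 = V * sqrt (1+2*U1) / (c*U1*(\<beta>-\<alpha>))"
  have Q1nn: "Q1 \<ge> 0" unfolding Q1_def using V1 u0 cpos U1pos ab by simp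
  define D0 where "D0 = (1+u0)*(1+4*b')"
  have D0p: "D0 > 0" unfolding D0_def using u0 b'0 by simp
  define C1 where "C1 = 1 + ustar + 2*U1 + 2*D0 + 2*Q1/(\<beta>-\<alpha>) + 16*(1+u0)*C'/(\<beta>-\<alpha>)"
  have t1: "2*Q1/(\<beta>-\<alpha>) \<ge> 0" using Q1nn ab by simp
  have t2: "16*(1+u0)*C'/(\<beta>-\<alpha>) \<ge> 0" using u0 C'0 ab by simp
  have C1ge: "C1 \<ge> 1" "C1 \<ge> ustar" "C1 \<ge> 1 + 2*U1" "C1 \<ge> 2*D0" "C1 \<ge> 2*Q1/(\<beta>-\<alpha>)"
    "C1 \<ge> 16*(1+u0)*C'/(\<beta>-\<alpha>)"
    unfolding C1_def using t1 t2 us U1pos D0p by linarith+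
  show ?thesis
  proof (rule exI[of _ C1], intro allI impI)
    fix n p :: nat and K :: real and \<pi> :: "real \<Rightarrow> real" and x :: real
    assume H: "1 \<le> p \<and> p \<le> n \<and> K \<ge> 0 \<and> prob_density_pos \<pi>
           \<and> condition1 R u0 b b' C' K ustar n p \<pi>
           \<and> \<bar>x\<bar> \<ge> C1 + sqrt (2 * K * (1 + u0) * ln (real n / real p))"
    then have p1: "1 \<le> p" and pn: "p \<le> n" and K0: "K \<ge> 0" and dens: "prob_density_pos \<pi>"
      and cond: "condition1 R u0 b b' C' K ustar n p \<pi>"
      and xb: "\<bar>x\<bar> \<ge> C1 + sqrt (2 * K * (1 + u0) * ln (real n / real p))" by auto
    obtain L where reg: "unif_reg_var R u0 L" and piL: "\<And>u. u > 0 \<Longrightarrow> \<pi> u = L u * exp (- b * u)"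
      using cond unfolding condition1_def by auto
    have tail: "\<And>u. u \<ge> ustar \<Longrightarrow> C' * \<pi> u \<ge> tau n p powr K * exp (- b' * u)"
      using cond unfolding condition1_def by auto
    have pnn: "\<And>u. u > 0 \<Longrightarrow> \<pi> u \<ge> 0" using dens unfolding prob_density_pos_def by auto
    have Lnn: "L v \<ge> 0" if "v \<ge> u0" for v
    proof -
      have "0 \<le> L v * exp (- b * v)" using pnn[of v] piL[of v] that u0 by simp
      then show ?thesis by (simp add: zero_le_mult_iff)
    qed
    have Lpos: "L v > 0" if "v \<ge> u0" for v using reg_pos[OF reg R0 Lnn[OF that] that] .
    have R1: "R \<ge> 1" using reg_R1[OF reg R0 Lpos[of u0]] by simp
    have cmp: "c * \<pi> u \<le> \<pi> t" if "u0 \<le> u" "u \<le> V" "U1 \<le> t" "t \<le> 2*U1" for u t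
    proof -
      have "2^k * u0 \<le> 2^k * u" using that by simp
      then have "t \<le> 2^k * u" using k2 that by linarith
      then have ch: "(1/R)^k * L u \<le> L t" using reg_chain[OF reg R1 Lpos that(1) u0, of t k] that U1a by linarith
      have "-b*(2*U1) + -b*u \<le> -b*t"
      proof -
        have "b * t \<le> b * (2*U1 + u)" using b0 that u0 by (intro mult_left_mono) auto
        then show ?thesis by (simp add: algebra_simps)
      qed
      then have ex: "exp (-b*(2*U1)) * exp (-b*u) \<le> exp (-b*t)" by (simp add: exp_add[symmetric])
      have upos: "u > 0" "t > 0" using that u0 U1pos by auto
      have "c * \<pi> u = ((1/R)^k * L u) * (exp (-b*(2*U1)) * exp (-b*u))"
        unfolding c_def using piL[OF upos(1)] by (simp add: ac_simps)
      also have "\<dots> \<le> L t * exp (-b*t)"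
        using ch ex Lpos[of u] Lpos[of t] that R0 U1a V1 by (intro mult_mono) auto
      also have "\<dots> = \<pi> t" using piL[OF upos(2)] by simp
      finally show ?thesis .
    qed
    define X where "X = \<bar>x\<bar>"
    define Lg where "Lg = ln (real n / real p)"
    define s where "s = sqrt (2 * K * (1 + u0) * Lg)"
    have np: "real n / real p \<ge> 1" using p1 pn by simp
    have Lg0: "Lg \<ge> 0" unfolding Lg_def using np by simp
    have s0: "s \<ge> 0" unfolding s_def using K0 Lg0 u0 by simp
    have s2: "s^2 = 2*(K*Lg)*(1+u0)" unfolding s_def using K0 Lg0 u0 by (simp add: ac_simps)
    have XY: "X \<ge> C1 + s" using xb unfolding X_def s_def Lg_def .
    have X1: "X \<ge> 1" and Xus: "X \<ge> ustar" and XU: "2*U1 < X" using XY s0 C1ge by linarith+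
    have Xpos: "X > 0" using X1 by simp
    have x2: "x\<^sup>2 = X\<^sup>2" unfolding X_def by simp
    have tauK: "tau n p powr K = exp (- (K*Lg))"
    proof -
      have pp: "real p / real n > 0" using p1 pn by simp
      have "ln (real p / real n) = - Lg" unfolding Lg_def using p1 pn by (simp add: ln_div)
      then show ?thesis unfolding tau_def using pp p1 pn by (simp add: powr_def)
    qed
    define m2 where "m2 = tau n p powr K * exp (-b'*(2*X)) / C'"
    have m2: "m2 \<le> \<pi> u" if "X \<le> u" "u \<le> 2*X" for u
    proof -
      have "exp (-b'*(2*X)) \<le> exp (-b'*u)" using that b'0 by simp
      then have "tau n p powr K * exp (-b'*(2*X)) \<le> tau n p powr K * exp (-b'*u)"
        by (intro mult_left_mono) auto
      also have "\<dots> \<le> C' * \<pi> u" using tail[of u] that Xus by simp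
      finally show ?thesis unfolding m2_def using C'0 by (simp add: divide_le_eq ac_simps)
    qed
    have ineq1: "exp (x\<^sup>2/2*\<alpha>) * V / (c * U1) \<le> (\<beta> - \<alpha>) / sqrt (1 + 2*U1) * exp (x\<^sup>2/2*\<beta>)"
    proof -
      define y where "y = x\<^sup>2/2*(\<beta>-\<alpha>)"
      have "x\<^sup>2 \<ge> C1" 
      proof -
        have "C1 \<le> X" using XY s0 by linarith
        then have "C1 * 1 \<le> X * X" using C1ge(1) by (intro mult_mono) auto
        then show ?thesis using x2 by (simp add: power2_eq_square)
      qed
      then have "x\<^sup>2 \<ge> 2*Q1/(\<beta>-\<alpha>)" using C1ge by linarith
      then have "Q1 \<le> y" unfolding y_def using ab by (simp add: field_simps)
      also have "y \<le> exp y" using exp_ge_add_one_self[of y] by linarith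
      finally have Qy: "Q1 \<le> exp y" .
      have sq: "sqrt (1+2*U1) > 0" using U1pos by simp
      have "exp (x\<^sup>2/2*\<alpha>) * V / (c * U1) = exp (x\<^sup>2/2*\<alpha>) * ((\<beta> - \<alpha>) / sqrt (1 + 2*U1) * Q1)"
        unfolding Q1_def using sq cpos U1pos ab by (simp add: field_simps)
      also have "\<dots> \<le> exp (x\<^sup>2/2*\<alpha>) * ((\<beta> - \<alpha>) / sqrt (1 + 2*U1) * exp y)"
        using Qy sq ab by (intro mult_left_mono) auto
      also have "\<dots> = (\<beta> - \<alpha>) / sqrt (1 + 2*U1) * exp (x\<^sup>2/2*\<beta>)"
      proof -
        have "x\<^sup>2/2*\<alpha> + y = x\<^sup>2/2*\<beta>" unfolding y_def by (simp add: field_simps)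
        then have "exp (x\<^sup>2/2*\<alpha>) * exp y = exp (x\<^sup>2/2*\<beta>)" by (metis exp_add)
        then show ?thesis by (metis mult.assoc mult.commute)
      qed
      finally show ?thesis .
    qed
    have ineq2: "2 * exp (x\<^sup>2/2*(u0/(1+u0))) \<le> (\<beta> - \<alpha>) / sqrt (1 + 2*X) * exp (x\<^sup>2/2*(X/(1+X))) * (X * m2)"
    proof -
      define E where "E = X\<^sup>2/2*(X/(1+X)) - K*Lg - 2*b'*X - X\<^sup>2/2*(u0/(1+u0))"
      have EB: "E \<ge> C1^2/(4*(1+u0))" unfolding E_def
        by (rule Ebound[OF u0 b'0 D0_def C1ge(4) s0 s2 XY X1])
      have "C1^2 \<ge> C1" using C1ge(1) by (simp add: power2_eq_square)
      then have "C1^2/(4*(1+u0)) \<ge> C1/(4*(1+u0))" using u0 by (intro divide_right_mono) auto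
      moreover have "C1/(4*(1+u0)) \<ge> 4*C'/(\<beta>-\<alpha>)"
        using C1ge(6) u0 ab by (simp add: field_simps)
      ultimately have E4: "E \<ge> 4*C'/(\<beta>-\<alpha>)" using EB by linarith
      have expE: "exp E \<ge> 4*C'/(\<beta>-\<alpha>)" using E4 exp_ge_add_one_self[of E] by linarith
      have sqX: "sqrt (1+2*X) \<le> 2*X"
      proof -
        have "X*1 \<le> X*X" using X1 by (intro mult_left_mono) auto
        moreover have "(2*X)^2 = 4*(X*X)" by (simp add: power2_eq_square)
        ultimately have "1 + 2*X \<le> (2*X)^2" using X1 by linarith
        then have "sqrt (1+2*X) \<le> sqrt ((2*X)^2)" by (rule real_sqrt_le_mono)
        moreover have "sqrt ((2*X)^2) = 2*X" using Xpos by (simp only: real_sqrt_abs)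
        ultimately show ?thesis by linarith
      qed
      have sqp: "sqrt (1+2*X) > 0" using Xpos by simp
      have half: "X / sqrt (1+2*X) \<ge> 1/2" using sqX sqp by (simp add: field_simps)
      have EQ: "(\<beta> - \<alpha>) / sqrt (1 + 2*X) * exp (x\<^sup>2/2*(X/(1+X))) * (X * m2)
            = ((\<beta> - \<alpha>) / C') * (X / sqrt (1+2*X)) * exp E * exp (x\<^sup>2/2*(u0/(1+u0)))"
      proof -
        have "exp E * exp (x\<^sup>2/2*(u0/(1+u0))) = exp (x\<^sup>2/2*(X/(1+X))) * exp (- (K*Lg)) * exp (-b'*(2*X))"
        proof -
          have "E + x\<^sup>2/2*(u0/(1+u0)) = x\<^sup>2/2*(X/(1+X)) + - (K*Lg) + -b'*(2*X)" unfolding E_def x2 by simp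
          then show ?thesis by (simp add: exp_add[symmetric])
        qed
        then show ?thesis unfolding m2_def tauK using C'0 sqp by (rule rearr)
      qed
      have "((\<beta> - \<alpha>) / C') * (X / sqrt (1+2*X)) * exp E \<ge> ((\<beta> - \<alpha>) / C') * (1/2) * (4*C'/(\<beta>-\<alpha>))"
      proof -
        have c0: "(\<beta> - \<alpha>) / C' \<ge> 0" using ab C'0 by simp
        have nn: "0 \<le> (\<beta> - \<alpha>) / C' * (X / sqrt (1+2*X))" using c0 Xpos sqp ab C'0 by (intro mult_nonneg_nonneg divide_nonneg_nonneg) auto
        have A: "(\<beta> - \<alpha>) / C' * (1/2) \<le> (\<beta> - \<alpha>) / C' * (X / sqrt (1+2*X))"
          using half c0 by (rule mult_left_mono)
        have c4: "0 \<le> 4*C'/(\<beta>-\<alpha>)" using ab C'0 by simp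
        show ?thesis by (rule mult_mono[OF A expE nn c4])
      qed
      moreover have "((\<beta> - \<alpha>) / C') * (1/2) * (4*C'/(\<beta>-\<alpha>)) = 2" using ab C'0 by (simp add: field_simps)
      ultimately have "2 \<le> ((\<beta> - \<alpha>) / C') * (X / sqrt (1+2*X)) * exp E" by linarith
      then have "2 * exp (x\<^sup>2/2*(u0/(1+u0))) \<le> ((\<beta> - \<alpha>) / C') * (X / sqrt (1+2*X)) * exp E * exp (x\<^sup>2/2*(u0/(1+u0)))"
        by (rule mult_right_mono) simp
      then show ?thesis using EQ by simp
    qed
    show "post_mean \<pi> x \<ge> \<alpha>"
      by (rule core[OF dens a0 ab b1 u0 V1 V2 U1a U1b XU cpos cmp m2 ineq1 ineq2])
  qed
qed

end
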